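(* Consider smoothed HS-$k$ with ground set $\mathcal B$ and collection $\mathcal C=\{C_1,\dots,C_n\}$, where each set weight $w_i$ is drawn independently from a distribution with density $f_i:[0,1]\to[0,\phi]$, and let $B=\max_{b\in\mathcal B}|\{C_i\in\mathcal C:b\in C_i\}|$. Then the expected maximum number of iterations of local search (over all initial feasible subsets and all improving sequences) is $O(3^{kB}|\mathcal B|^kn^2\phi)$, with an absolute hidden constant.
   Context: HS-$k$ (Hitting Set): given a finite ground set $\mathcal B$, a collection $\mathcal C=\{C_1,\dots,C_n\}$ of subsets of $\mathcal B$ with weights $w_i$, and an integer $m$, a feasible solution is $S\subseteq\mathcal B$ with $|S|\le m$; its weight is $\sum_{i:\,S\cap C_i\ne\emptyset}w_i$, to be maximized. Neighbours of $S$ are feasible subsets obtained by adding some $k_1$ elements and removing some $k_2$ elements with $k_1+k_2\le k$. A solution is a feasible subset with no neighbour of strictly larger weight; local search repeatedly moves to a strictly better neighbour. *)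

theory Defs
  imports "HOL-Probability.Probability"
begin

definition hs_feasible :: "nat set \<Rightarrow> nat \<Rightarrow> nat set \<Rightarrow> bool" where
  "hs_feasible Bs m S \<longleftrightarrow> S \<subseteq> Bs \<and> card S \<le> m"

definition hs_weight :: "(nat \<Rightarrow> nat set) \<Rightarrow> nat \<Rightarrow> (nat \<Rightarrow> real) \<Rightarrow> nat set \<Rightarrow> real" where
  "hs_weight C n w S = (\<Sum>i\<in>{i. i < n \<and> S \<inter> C i \<noteq> {}}. w i)"

definition hs_neighbour :: "nat set \<Rightarrow> nat \<Rightarrow> nat \<Rightarrow> nat set \<Rightarrow> nat set \<Rightarrow> bool" where
  "hs_neighbour Bs m k S S' \<longleftrightarrow> hs_feasible Bs m S' \<and> card (S' - S) + card (S - S') \<le> k"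

definition hs_improving_seq ::
  "nat set \<Rightarrow> (nat \<Rightarrow> nat set) \<Rightarrow> nat \<Rightarrow> nat \<Rightarrow> nat \<Rightarrow> (nat \<Rightarrow> real) \<Rightarrow> nat set list \<Rightarrow> bool" where
  "hs_improving_seq Bs C n m k w xs \<longleftrightarrow> xs \<noteq> [] \<and> hs_feasible Bs m (hd xs) \<and>
     (\<forall>j. Suc j < length xs \<longrightarrow> hs_neighbour Bs m k (xs ! j) (xs ! Suc j)
        \<and> hs_weight C n w (xs ! j) < hs_weight C n w (xs ! Suc j))"

definition hs_max_iter ::
  "nat set \<Rightarrow> (nat \<Rightarrow> nat set) \<Rightarrow> nat \<Rightarrow> nat \<Rightarrow> nat \<Rightarrow> (nat \<Rightarrow> real) \<Rightarrow> ennreal" where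
  "hs_max_iter Bs C n m k w =
     (\<Squnion>xs\<in>{xs. hs_improving_seq Bs C n m k w xs}. of_nat (length xs - 1))"

definition hs_B :: "nat set \<Rightarrow> (nat \<Rightarrow> nat set) \<Rightarrow> nat \<Rightarrow> nat" where
  "hs_B Bs C n = Max (insert 0 ((\<lambda>b. card {i. i < n \<and> b \<in> C i}) ` Bs))"

end

theory Submission
  imports Defs
begin


lemma prob_dens:
  fixes g :: "real \<Rightarrow> real"
  assumes "g \<in> borel_measurable borel" "(\<integral>\<^sup>+ x. ennreal (g x) \<partial>lborel) = 1"
  shows "prob_space (density lborel (\<lambda>x. ennreal (g x)))"
proof -
  have m: "(\<lambda>x. ennreal (g x)) \<in> borel_measurable lborel" using assms(1) by simp
  show ?thesis by (intro prob_spaceI) (simp add: emeasure_density[OF m] assms(2))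
qed

lemma L1:
  fixes f :: "nat \<Rightarrow> real \<Rightarrow> real" and a :: "nat \<Rightarrow> real"
  assumes meas: "\<And>i. i<n \<Longrightarrow> f i \<in> borel_measurable borel"
    and bnd: "\<And>i x. i<n \<Longrightarrow> 0 \<le> f i x \<and> f i x \<le> \<phi>"
    and int1: "\<And>i. i<n \<Longrightarrow> (\<integral>\<^sup>+x. ennreal (f i x) \<partial>lborel) = 1"
    and j: "j < n" and aj: "a j = 1 \<or> a j = -1" and eps: "0 \<le> \<epsilon>"
  shows "(\<integral>\<^sup>+w. indicator {w. 0 < (\<Sum>i<n. a i * w i) \<and> (\<Sum>i<n. a i * w i) \<le> \<epsilon>} w
            \<partial>PiM {..<n} (\<lambda>i. density lborel (\<lambda>x. ennreal (f i x)))) \<le> ennreal (\<phi> * \<epsilon>)"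
proof -
  define M where "M = (\<lambda>i. if i < n then density lborel (\<lambda>x. ennreal (f i x)) else return lborel 0)"
  have probM: "prob_space (M i)" for i
    by (cases "i < n") (auto simp: M_def prob_space_return intro!: prob_dens meas int1)
  interpret P: product_prob_space M "{..<n}" by (rule product_prob_spaceI[OF probM])
  have setsM: "sets (M i) = sets borel" for i by (simp add: M_def)
  have PiM_eq: "PiM {..<n} (\<lambda>i. density lborel (\<lambda>x. ennreal (f i x))) = PiM {..<n} M"
    by (rule PiM_cong) (auto simp: M_def)
  have phi0: "0 \<le> \<phi>" using bnd[OF j, of 0] by simp
  define J where "J = {..<n} - {j}"
  have ins: "{..<n} = insert j J" using j by (auto simp: J_def)
  define S where "S = (\<lambda>w::nat\<Rightarrow>real. \<Sum>i<n. a i * w i)"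
  have Sm: "S \<in> borel_measurable (PiM {..<n} M)"
    unfolding S_def
  proof (intro borel_measurable_sum borel_measurable_times borel_measurable_const)
    fix i assume "i \<in> {..<n}"
    then show "(\<lambda>x. x i) \<in> borel_measurable (PiM {..<n} M)"
      by (subst measurable_cong_sets[OF refl setsM[symmetric], of _ i]) (rule measurable_component_singleton)
  qed
  have gm: "(\<lambda>w. indicator {w. 0 < S w \<and> S w \<le> \<epsilon>} w :: ennreal) \<in> borel_measurable (PiM (insert j J) M)"
  proof -
    have "{w \<in> space (PiM {..<n} M). 0 < S w \<and> S w \<le> \<epsilon>} \<in> sets (PiM {..<n} M)"
      using Sm by measurable
    moreover have "{w. 0 < S w \<and> S w \<le> \<epsilon>} \<inter> space (PiM {..<n} M) = {w \<in> space (PiM {..<n} M). 0 < S w \<and> S w \<le> \<epsilon>}" by auto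
    ultimately show ?thesis unfolding ins[symmetric] by (simp add: borel_measurable_indicator')
  qed
  have inner: "(\<integral>\<^sup>+y. indicator {w. 0 < S w \<and> S w \<le> \<epsilon>} (x(j:=y)) \<partial>M j) \<le> ennreal (\<phi> * \<epsilon>)" for x
  proof -
    define c where "c = (\<Sum>i\<in>J. a i * x i)"
    have Sx: "S (x(j:=y)) = a j * y + c" for y
      unfolding S_def c_def J_def using j by (subst sum.remove[of _ j]) (auto intro!: sum.cong)
    define T where "T = {y. 0 < a j * y + c \<and> a j * y + c \<le> \<epsilon>}"
    have T: "T = {- c <.. \<epsilon> - c} \<or> T = {c - \<epsilon> ..< c}"
      using aj unfolding T_def by (auto simp: algebra_simps)
    have Tm: "T \<in> sets lborel" and Te: "emeasure lborel T = ennreal \<epsilon>"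
      using T eps by auto
    have "(\<integral>\<^sup>+y. indicator {w. 0 < S w \<and> S w \<le> \<epsilon>} (x(j:=y)) \<partial>M j)
        = (\<integral>\<^sup>+y. indicator T y \<partial>density lborel (\<lambda>x. ennreal (f j x)))"
      using j by (simp add: M_def Sx T_def indicator_def)
    also have "\<dots> = (\<integral>\<^sup>+y. ennreal (f j y) * indicator T y \<partial>lborel)"
      using Tm meas[OF j] by (intro nn_integral_density) auto
    also have "\<dots> \<le> (\<integral>\<^sup>+y. ennreal \<phi> * indicator T y \<partial>lborel)"
      using bnd[OF j] by (intro nn_integral_mono) (auto simp: indicator_def intro: ennreal_leI)
    also have "\<dots> = ennreal \<phi> * ennreal \<epsilon>" using Tm Te by (simp add: nn_integral_cmult_indicator)
    also have "\<dots> = ennreal (\<phi> * \<epsilon>)" using phi0 eps by (simp add: ennreal_mult)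
    finally show ?thesis .
  qed
  have "(\<integral>\<^sup>+w. indicator {w. 0 < S w \<and> S w \<le> \<epsilon>} w \<partial>PiM {..<n} M)
     = (\<integral>\<^sup>+x. (\<integral>\<^sup>+y. indicator {w. 0 < S w \<and> S w \<le> \<epsilon>} (x(j:=y)) \<partial>M j) \<partial>PiM J M)"
    unfolding ins by (rule P.product_nn_integral_insert[OF _ _ gm]) (auto simp: J_def)
  also have "\<dots> \<le> (\<integral>\<^sup>+x. ennreal (\<phi> * \<epsilon>) \<partial>PiM J M)"
    by (intro nn_integral_mono inner)
  also have "\<dots> = ennreal (\<phi> * \<epsilon>)"
    using prob_space.emeasure_space_1[OF prob_space_PiM[of J M]] probM by simp
  finally show ?thesis unfolding PiM_eq S_def .
qed

lemma L0:
  fixes f :: "nat \<Rightarrow> real \<Rightarrow> real"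
  assumes meas: "\<And>i. i<n \<Longrightarrow> f i \<in> borel_measurable borel"
    and zero: "\<And>i x. i<n \<Longrightarrow> x \<notin> {0..1} \<Longrightarrow> f i x = 0"
    and int1: "\<And>i. i<n \<Longrightarrow> (\<integral>\<^sup>+x. ennreal (f i x) \<partial>lborel) = 1"
  shows "AE w in PiM {..<n} (\<lambda>i. density lborel (\<lambda>x. ennreal (f i x))). \<forall>i\<in>{..<n}. w i \<in> {0..1}"
proof (intro AE_finite_allI)
  fix i assume i: "i \<in> {..<n}"
  have m: "(\<lambda>x. ennreal (f i x)) \<in> borel_measurable lborel" using meas i by simp
  have "AE x in density lborel (\<lambda>x. ennreal (f i x)). x \<in> {0..1}"
    unfolding AE_density[OF m]
  proof (intro AE_I2 impI)
    fix x assume "0 < ennreal (f i x)"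
    then show "x \<in> {0..1}" using zero[of i x] i by (cases "x \<in> {0..1}") auto
  qed
  then show "AE w in PiM {..<n} (\<lambda>i. density lborel (\<lambda>x. ennreal (f i x))). w i \<in> {0..1}"
    by (intro AE_PiM_component[OF _ i]) (auto intro!: prob_dens meas int1)
qed simp



lemma dyadic: "T < 2^n \<Longrightarrow> T \<le> (\<Sum>j<n. if 2^j \<le> T then 2^j else (0::nat))"
proof (induction n arbitrary: T)
  case 0 then show ?case by simp
next
  case (Suc n)
  show ?case
  proof (cases "T < 2^n")
    case True
    then show ?thesis using Suc.IH[OF True] by simp
  next
    case False
    have "(2::nat)^n - 1 \<le> (\<Sum>j<n. if (2::nat)^j \<le> 2^n - 1 then 2^j else (0::nat))"
      by (rule Suc.IH) simp
    also have "\<dots> \<le> (\<Sum>j<n. if (2::nat)^j \<le> T then 2^j else (0::nat))"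
      using False by (intro sum_mono) auto
    finally show ?thesis using False Suc.prems by simp
  qed
qed

definition ID :: "(nat \<Rightarrow> nat set) \<Rightarrow> nat \<Rightarrow> nat set \<Rightarrow> nat set" where
  "ID C n D = {i. i < n \<and> C i \<inter> D \<noteq> {}}"

definition vecs :: "(nat \<Rightarrow> nat set) \<Rightarrow> nat \<Rightarrow> nat set \<Rightarrow> (nat \<Rightarrow> real) set" where
  "vecs C n D = (\<lambda>g i. if i \<in> ID C n D then g i else 0) ` (PiE (ID C n D) (\<lambda>_. {-1,0,1}))"

definition Dset :: "nat set \<Rightarrow> nat \<Rightarrow> nat set set" where
  "Dset Bs k = set ` {xs. set xs \<subseteq> Bs \<and> length xs = k}"

definition FF :: "nat set \<Rightarrow> (nat \<Rightarrow> nat set) \<Rightarrow> nat \<Rightarrow> nat \<Rightarrow> (nat \<Rightarrow> real) set" where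
  "FF Bs C n k = {a \<in> (\<Union>D\<in>Dset Bs k. vecs C n D). \<exists>j<n. a j \<noteq> 0}"

lemma card_ID:
  assumes "finite Bs" "D \<subseteq> Bs" "card D \<le> k"
  shows "card (ID C n D) \<le> k * hs_B Bs C n"
proof -
  have fD: "finite D" using assms finite_subset by blast
  have "ID C n D \<subseteq> (\<Union>b\<in>D. {i. i < n \<and> b \<in> C i})" by (auto simp: ID_def)
  then have "card (ID C n D) \<le> card (\<Union>b\<in>D. {i. i < n \<and> b \<in> C i})"
    using fD by (intro card_mono) auto
  also have "\<dots> \<le> (\<Sum>b\<in>D. card {i. i < n \<and> b \<in> C i})" using fD by (rule card_UN_le)
  also have "\<dots> \<le> (\<Sum>b\<in>D. hs_B Bs C n)"
  proof (intro sum_mono)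
    fix b assume "b \<in> D"
    then have "b \<in> Bs" using assms by auto
    then show "card {i. i < n \<and> b \<in> C i} \<le> hs_B Bs C n"
      unfolding hs_B_def using assms(1) by (intro Max_ge) auto
  qed
  also have "\<dots> = card D * hs_B Bs C n" by simp
  also have "\<dots> \<le> k * hs_B Bs C n" using assms(3) by simp
  finally show ?thesis .
qed

lemma card_vecs: "card (vecs C n D) \<le> 3 ^ card (ID C n D)"
proof -
  have fin: "finite (ID C n D)" by (auto simp: ID_def)
  have "card (vecs C n D) \<le> card (PiE (ID C n D) (\<lambda>_. {-1,0,1::real}))"
    unfolding vecs_def by (rule card_image_le) (simp add: fin finite_PiE)
  also have "\<dots> = 3 ^ card (ID C n D)" using fin by (simp add: card_PiE numeral_3_eq_3)
  finally show ?thesis .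
qed

lemma finite_vecs: "finite (vecs C n D)"
  unfolding vecs_def by (intro finite_imageI finite_PiE) (auto simp: ID_def)

lemma Dset_props:
  assumes "D \<in> Dset Bs k" shows "D \<subseteq> Bs" "card D \<le> k"
  using assms by (auto simp: Dset_def card_length)

lemma finite_Dset: "finite Bs \<Longrightarrow> finite (Dset Bs k)"
  unfolding Dset_def by (intro finite_imageI finite_lists_length_eq)

lemma card_Dset: "finite Bs \<Longrightarrow> card (Dset Bs k) \<le> card Bs ^ k"
proof -
  assume f: "finite Bs"
  have "card (Dset Bs k) \<le> card {xs. set xs \<subseteq> Bs \<and> length xs = k}"
    unfolding Dset_def by (rule card_image_le) (rule finite_lists_length_eq[OF f])
  then show ?thesis by (simp add: card_lists_length_eq[OF f])
qed

lemma finite_FF: "finite Bs \<Longrightarrow> finite (FF Bs C n k)"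
  unfolding FF_def using finite_Dset finite_vecs by auto

lemma card_FF:
  assumes "finite Bs"
  shows "card (FF Bs C n k) \<le> card Bs ^ k * 3 ^ (k * hs_B Bs C n)"
proof -
  have "card (FF Bs C n k) \<le> card (\<Union>D\<in>Dset Bs k. vecs C n D)"
    unfolding FF_def by (intro card_mono) (auto simp: finite_Dset finite_vecs assms)
  also have "\<dots> \<le> (\<Sum>D\<in>Dset Bs k. card (vecs C n D))"
    by (intro card_UN_le finite_Dset assms)
  also have "\<dots> \<le> (\<Sum>D\<in>Dset Bs k. 3 ^ (k * hs_B Bs C n))"
  proof (intro sum_mono)
    fix D assume D: "D \<in> Dset Bs k"
    have "card (vecs C n D) \<le> 3 ^ card (ID C n D)" by (rule card_vecs)
    also have "\<dots> \<le> 3 ^ (k * hs_B Bs C n)"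
      using card_ID[OF assms Dset_props[OF D]] by (intro power_increasing) auto
    finally show "card (vecs C n D) \<le> 3 ^ (k * hs_B Bs C n)" .
  qed
  also have "\<dots> = card (Dset Bs k) * 3 ^ (k * hs_B Bs C n)" by simp
  also have "\<dots> \<le> card Bs ^ k * 3 ^ (k * hs_B Bs C n)"
    using card_Dset[OF assms, of k] by simp
  finally show ?thesis .
qed

lemma FF_unit:
  assumes "a \<in> FF Bs C n k" shows "\<exists>j<n. a j = 1 \<or> a j = -1"
proof -
  from assms obtain D j where D: "a \<in> vecs C n D" and j: "j < n" "a j \<noteq> 0"
    unfolding FF_def by auto
  from D obtain g where g: "g \<in> PiE (ID C n D) (\<lambda>_. {-1,0,1})"
    and a: "a = (\<lambda>i. if i \<in> ID C n D then g i else 0)" unfolding vecs_def by auto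
  have "a j \<in> {-1,0,1}" using g unfolding a by (auto simp: PiE_iff)
  then show ?thesis using j by auto
qed

lemma hw: "hs_weight C n w S = (\<Sum>i<n. if S \<inter> C i \<noteq> {} then w i else 0)"
proof -
  have "{i. i < n \<and> S \<inter> C i \<noteq> {}} = {i \<in> {..<n}. S \<inter> C i \<noteq> {}}" by auto
  then show ?thesis unfolding hs_weight_def by (simp add: sum.inter_filter[symmetric])
qed

lemma step_FF:
  assumes fin: "finite Bs" and S: "S \<subseteq> Bs" and S': "S' \<subseteq> Bs"
    and ck: "card (S' - S) + card (S - S') \<le> k"
    and lt: "hs_weight C n w S < hs_weight C n w S'"
  defines "a \<equiv> (\<lambda>i. if i < n then (if S' \<inter> C i \<noteq> {} then 1 else 0) - (if S \<inter> C i \<noteq> {} then 1 else 0) else (0::real))"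
  shows "a \<in> FF Bs C n k" "hs_weight C n w S' - hs_weight C n w S = (\<Sum>i<n. a i * w i)"
proof -
  show eq: "hs_weight C n w S' - hs_weight C n w S = (\<Sum>i<n. a i * w i)"
    unfolding hw a_def by (simp add: sum_subtractf[symmetric] algebra_simps) (intro sum.cong, auto)
  define D where "D = (S' - S) \<union> (S - S')"
  have fD: "finite D" unfolding D_def using S S' fin finite_subset by blast
  have DB: "D \<subseteq> Bs" unfolding D_def using S S' by auto
  have cD: "card D \<le> k" unfolding D_def using card_Un_le[of "S' - S" "S - S'"] ck by linarith
  have Dne: "D \<noteq> {}"
  proof
    assume "D = {}" then have "S = S'" unfolding D_def by auto
    then show False using lt by simp
  qed
  define xs0 where "xs0 = sorted_list_of_set D"
  have sx0: "set xs0 = D" "length xs0 = card D" using fD by (auto simp: xs0_def)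
  define xs where "xs = xs0 @ replicate (k - length xs0) (hd xs0)"
  have "xs0 \<noteq> []" using sx0 Dne by auto
  then have "hd xs0 \<in> D" using sx0 by (metis hd_in_set)
  then have "set xs = D" unfolding xs_def using sx0 by auto
  moreover have "length xs = k" unfolding xs_def using sx0 cD by simp
  ultimately have DD: "D \<in> Dset Bs k" unfolding Dset_def using DB by auto
  have aD: "a i = 0" if "i \<notin> ID C n D" for i
  proof (cases "i < n")
    case True
    then have "C i \<inter> D = {}" using that by (auto simp: ID_def)
    then have "S \<inter> C i = S' \<inter> C i" unfolding D_def by auto
    then show ?thesis unfolding a_def by simp
  qed (simp add: a_def)
  have "a \<in> vecs C n D"
    unfolding vecs_def
  proof (rule image_eqI[where x = "restrict a (ID C n D)"])
    show "a = (\<lambda>i. if i \<in> ID C n D then restrict a (ID C n D) i else 0)"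
      using aD by auto
    show "restrict a (ID C n D) \<in> PiE (ID C n D) (\<lambda>_. {-1,0,1})"
      by (auto simp: a_def)
  qed
  moreover have "\<exists>j<n. a j \<noteq> 0"
  proof (rule ccontr)
    assume "\<not> ?thesis"
    then have "(\<Sum>i<n. a i * w i) = 0" by simp
    then show False using eq lt by simp
  qed
  ultimately show "a \<in> FF Bs C n k" unfolding FF_def using DD by auto
qed



lemma seq_mono:
  assumes "hs_improving_seq Bs C n m k w xs"
  shows "i < j \<Longrightarrow> j < length xs \<Longrightarrow> hs_weight C n w (xs!i) < hs_weight C n w (xs!j)"
proof (induction j)
  case 0 then show ?case by simp
next
  case (Suc j)
  have st: "hs_weight C n w (xs!j) < hs_weight C n w (xs!Suc j)"
    using assms Suc.prems unfolding hs_improving_seq_def by auto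
  show ?case
  proof (cases "i = j")
    case True then show ?thesis using st by simp
  next
    case False then show ?thesis using Suc st by auto
  qed
qed

lemma seq_len:
  assumes "hs_improving_seq Bs C n m k w xs"
  shows "length xs \<le> 2^n"
proof -
  define h where "h j = {i. i < n \<and> xs!j \<inter> C i \<noteq> {}}" for j
  have inj: "inj_on h {..<length xs}"
  proof (rule inj_onI)
    fix a b assume a: "a \<in> {..<length xs}" and b: "b \<in> {..<length xs}" and e: "h a = h b"
    have we: "hs_weight C n w (xs!a) = hs_weight C n w (xs!b)"
      using e unfolding hs_weight_def h_def by simp
    show "a = b"
    proof (rule ccontr)
      assume "a \<noteq> b"
      then have "a < b \<or> b < a" by auto
      then show False using seq_mono[OF assms] a b we by fastforce
    qed
  qed
  have "card {..<length xs} \<le> card (Pow {..<n})"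
    by (rule card_inj_on_le[OF inj]) (auto simp: h_def)
  then show ?thesis by (simp add: card_Pow)
qed

lemma seq_sets:
  assumes "hs_improving_seq Bs C n m k w xs" "j < length xs"
  shows "xs!j \<subseteq> Bs"
proof (cases j)
  case 0
  then show ?thesis using assms unfolding hs_improving_seq_def hs_feasible_def
    by (auto simp: hd_conv_nth[symmetric])
next
  case (Suc j')
  then show ?thesis using assms unfolding hs_improving_seq_def hs_neighbour_def hs_feasible_def
    by auto
qed

lemma weight_bounds:
  assumes "\<forall>i<n. w i \<in> {0..1}"
  shows "0 \<le> hs_weight C n w S" "hs_weight C n w S \<le> real n"
proof -
  let ?H = "{i. i < n \<and> S \<inter> C i \<noteq> {}}"
  show "0 \<le> hs_weight C n w S" unfolding hs_weight_def using assms by (intro sum_nonneg) auto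
  have "hs_weight C n w S \<le> (\<Sum>i\<in>?H. 1)" unfolding hs_weight_def using assms by (intro sum_mono) auto
  also have "\<dots> = real (card ?H)" by simp
  also have "\<dots> \<le> real (card {..<n})" by (intro of_nat_mono card_mono) auto
  finally show "hs_weight C n w S \<le> real n" by simp
qed

lemma pointwise:
  assumes fin: "finite Bs" and w01: "\<forall>i<n. w i \<in> {0..1}"
  shows "hs_max_iter Bs C n m k w \<le> (\<Sum>j<n. (2::ennreal)^j * (\<Sum>a\<in>FF Bs C n k.
           indicator {w. 0 < (\<Sum>i<n. a i * w i) \<and> (\<Sum>i<n. a i * w i) \<le> real n / 2^j} w))"
  unfolding hs_max_iter_def
proof (intro SUP_least)
  fix xs assume "xs \<in> {xs. hs_improving_seq Bs C n m k w xs}"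
  then have xs: "hs_improving_seq Bs C n m k w xs" by simp
  define T where "T = length xs - 1"
  have L1: "length xs \<ge> 1" using xs unfolding hs_improving_seq_def by (cases xs) auto
  have Tlt: "T < 2^n" using seq_len[OF xs] L1 unfolding T_def by simp
  define W where "W s = hs_weight C n w (xs!s)" for s
  define g where "g s = W (Suc s) - W s" for s
  have key: "\<exists>a\<in>FF Bs C n k. 0 < (\<Sum>i<n. a i * w i) \<and> (\<Sum>i<n. a i * w i) \<le> real n / 2^j"
    if j: "2^j \<le> T" for j
  proof -
    have Tpos: "0 < T" using j by (metis le_zero_eq nat_less_le power_not_zero zero_neq_numeral not_gr0)
    have "\<exists>s<T. g s \<le> real n / 2^j"
    proof (rule ccontr)
      assume "\<not> ?thesis"
      then have gs: "\<And>s. s < T \<Longrightarrow> real n / 2^j < g s" by auto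
      have "(\<Sum>s<T. real n / 2^j) < (\<Sum>s<T. g s)"
        using Tpos by (intro sum_strict_mono gs) auto
      also have "(\<Sum>s<T. g s) = W T - W 0" unfolding g_def by (rule sum_lessThan_telescope)
      also have "\<dots> \<le> real n" using weight_bounds[OF w01, of C "xs!T"] weight_bounds[OF w01, of C "xs!0"]
        unfolding W_def by linarith
      finally have "real T * (real n / 2^j) < real n" by simp
      moreover have "real n \<le> real T * (real n / 2^j)"
      proof -
        have "(2::real)^j \<le> real T" using j by (metis of_nat_le_iff of_nat_numeral of_nat_power)
        then have "real n * 2^j \<le> real n * real T" by (intro mult_left_mono) auto
        then show ?thesis by (simp add: field_simps)
      qed
      ultimately show False by simp
    qed
    then obtain s where s: "s < T" "g s \<le> real n / 2^j" by auto
    have sl: "Suc s < length xs" using s T_def by simp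
    have st: "hs_neighbour Bs m k (xs ! s) (xs ! Suc s)"
      "hs_weight C n w (xs ! s) < hs_weight C n w (xs ! Suc s)"
      using xs sl unfolding hs_improving_seq_def by auto
    have sub: "xs!s \<subseteq> Bs" "xs!Suc s \<subseteq> Bs" using seq_sets[OF xs] sl by auto
    have ck: "card (xs!Suc s - xs!s) + card (xs!s - xs!Suc s) \<le> k"
      using st(1) unfolding hs_neighbour_def by simp
    note sf = step_FF[OF fin sub ck st(2)]
    show ?thesis
      by (rule bexI[OF _ sf(1)]) (use sf(2) st(2) s(2) in \<open>auto simp: g_def W_def\<close>)
  qed
  have "of_nat (length xs - 1) = (of_nat T :: ennreal)" by (simp add: T_def)
  also have "\<dots> \<le> of_nat (\<Sum>j<n. if 2^j \<le> T then 2^j else (0::nat))"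
    using dyadic[OF Tlt] by (simp only: of_nat_le_iff)
  also have "\<dots> = (\<Sum>j<n. of_nat (if 2^j \<le> T then 2^j else (0::nat)))" by (rule of_nat_sum)
  also have "\<dots> \<le> (\<Sum>j<n. (2::ennreal)^j * (\<Sum>a\<in>FF Bs C n k.
           indicator {w. 0 < (\<Sum>i<n. a i * w i) \<and> (\<Sum>i<n. a i * w i) \<le> real n / 2^j} w))"
  proof (intro sum_mono)
    fix j assume "j \<in> {..<n}"
    show "of_nat (if 2^j \<le> T then 2^j else (0::nat)) \<le> (2::ennreal)^j * (\<Sum>a\<in>FF Bs C n k.
           indicator {w. 0 < (\<Sum>i<n. a i * w i) \<and> (\<Sum>i<n. a i * w i) \<le> real n / 2^j} w)"
    proof (cases "2^j \<le> T")
      case True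
      obtain a where a: "a \<in> FF Bs C n k" "0 < (\<Sum>i<n. a i * w i)" "(\<Sum>i<n. a i * w i) \<le> real n / 2^j"
        using key[OF True] by auto
      have "(1::ennreal) = indicator {w. 0 < (\<Sum>i<n. a i * w i) \<and> (\<Sum>i<n. a i * w i) \<le> real n / 2^j} w"
        using a by simp
      also have "\<dots> \<le> (\<Sum>a\<in>FF Bs C n k.
           indicator {w. 0 < (\<Sum>i<n. a i * w i) \<and> (\<Sum>i<n. a i * w i) \<le> real n / 2^j} w)"
        by (rule member_le_sum[OF a(1)]) (auto simp: finite_FF fin)
      finally have "(2::ennreal)^j * 1 \<le> (2::ennreal)^j * (\<Sum>a\<in>FF Bs C n k.
           indicator {w. 0 < (\<Sum>i<n. a i * w i) \<and> (\<Sum>i<n. a i * w i) \<le> real n / 2^j} w)"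
        by (rule mult_left_mono) simp
      then show ?thesis using True by simp
    qed simp
  qed
  finally show "of_nat (length xs - 1) \<le> (\<Sum>j<n. (2::ennreal)^j * (\<Sum>a\<in>FF Bs C n k.
           indicator {w. 0 < (\<Sum>i<n. a i * w i) \<and> (\<Sum>i<n. a i * w i) \<le> real n / 2^j} w))" .
qed



lemma Lm:
  fixes a :: "nat \<Rightarrow> real"
  shows "(\<lambda>w. indicator {w. 0 < (\<Sum>i<n. a i * w i) \<and> (\<Sum>i<n. a i * w i) \<le> \<epsilon>} w :: ennreal)
    \<in> borel_measurable (PiM {..<n} (\<lambda>i. density lborel (g i)))"
proof -
  define M where "M = (\<lambda>i. density lborel (g i))"
  have setsM: "sets (M i) = sets borel" for i by (simp add: M_def)
  define S where "S = (\<lambda>w::nat\<Rightarrow>real. \<Sum>i<n. a i * w i)"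
  have Sm: "S \<in> borel_measurable (PiM {..<n} M)"
    unfolding S_def
  proof (intro borel_measurable_sum borel_measurable_times borel_measurable_const)
    fix i assume "i \<in> {..<n}"
    then show "(\<lambda>x. x i) \<in> borel_measurable (PiM {..<n} M)"
      by (subst measurable_cong_sets[OF refl setsM[symmetric], of _ i]) (rule measurable_component_singleton)
  qed
  have "{w \<in> space (PiM {..<n} M). 0 < S w \<and> S w \<le> \<epsilon>} \<in> sets (PiM {..<n} M)"
    using Sm by measurable
  moreover have "{w. 0 < S w \<and> S w \<le> \<epsilon>} \<inter> space (PiM {..<n} M) = {w \<in> space (PiM {..<n} M). 0 < S w \<and> S w \<le> \<epsilon>}" by auto
  ultimately have "(\<lambda>w. indicator {w. 0 < S w \<and> S w \<le> \<epsilon>} w :: ennreal) \<in> borel_measurable (PiM {..<n} M)"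
    by (simp add: borel_measurable_indicator')
  then show ?thesis unfolding S_def M_def .
qed

theorem mainTheorem16:
  shows "\<exists>c::real. \<forall>(Bs::nat set) (C::nat \<Rightarrow> nat set) (n::nat) (m::nat) (k::nat)
      (f::nat \<Rightarrow> real \<Rightarrow> real) (\<phi>::real).
    finite Bs \<and> (\<forall>i<n. C i \<subseteq> Bs) \<and>
    (\<forall>i<n. f i \<in> borel_measurable borel \<and> (\<forall>x. 0 \<le> f i x \<and> f i x \<le> \<phi>) \<and>
           (\<forall>x. x \<notin> {0..1} \<longrightarrow> f i x = 0) \<and>
           (\<integral>\<^sup>+ x. ennreal (f i x) \<partial>lborel) = 1)
    \<longrightarrow> (\<integral>\<^sup>+ w. hs_max_iter Bs C n m k w
            \<partial>(PiM {..<n} (\<lambda>i. density lborel (\<lambda>x. ennreal (f i x)))))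
        \<le> ennreal (c * 3 ^ (k * hs_B Bs C n) * real (card Bs) ^ k * real n ^ 2 * \<phi>)"
proof (intro exI[of _ 1] allI impI)
  fix Bs :: "nat set" and C :: "nat \<Rightarrow> nat set" and n m k :: nat and f :: "nat \<Rightarrow> real \<Rightarrow> real" and \<phi> :: real
  assume H: "finite Bs \<and> (\<forall>i<n. C i \<subseteq> Bs) \<and>
    (\<forall>i<n. f i \<in> borel_measurable borel \<and> (\<forall>x. 0 \<le> f i x \<and> f i x \<le> \<phi>) \<and>
           (\<forall>x. x \<notin> {0..1} \<longrightarrow> f i x = 0) \<and>
           (\<integral>\<^sup>+ x. ennreal (f i x) \<partial>lborel) = 1)"
  then have fin: "finite Bs"
    and meas: "\<And>i. i<n \<Longrightarrow> f i \<in> borel_measurable borel"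
    and bnd: "\<And>i x. i<n \<Longrightarrow> 0 \<le> f i x \<and> f i x \<le> \<phi>"
    and zero: "\<And>i x. i<n \<Longrightarrow> x \<notin> {0..1} \<Longrightarrow> f i x = 0"
    and int1: "\<And>i. i<n \<Longrightarrow> (\<integral>\<^sup>+x. ennreal (f i x) \<partial>lborel) = 1"
    by auto
  let ?\<mu> = "PiM {..<n} (\<lambda>i. density lborel (\<lambda>x. ennreal (f i x)))"
  let ?F = "FF Bs C n k"
  let ?ind = "\<lambda>j a w. indicator {w. 0 < (\<Sum>i<n. a i * w i) \<and> (\<Sum>i<n. a i * w i) \<le> real n / 2^j} w :: ennreal"
  have "(\<integral>\<^sup>+ w. hs_max_iter Bs C n m k w \<partial>?\<mu>) \<le> (\<integral>\<^sup>+ w. (\<Sum>j<n. (2::ennreal)^j * (\<Sum>a\<in>?F. ?ind j a w)) \<partial>?\<mu>)"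
  proof (rule nn_integral_mono_AE)
    show "AE w in ?\<mu>. hs_max_iter Bs C n m k w \<le> (\<Sum>j<n. (2::ennreal)^j * (\<Sum>a\<in>?F. ?ind j a w))"
    proof -
      have ae: "AE w in ?\<mu>. \<forall>i\<in>{..<n}. w i \<in> {0..1}"
        by (rule L0) (auto intro: meas zero int1)
      show ?thesis using ae by eventually_elim (rule pointwise[OF fin], auto)
    qed
  qed
  also have "\<dots> = (\<Sum>j<n. (2::ennreal)^j * (\<Sum>a\<in>?F. \<integral>\<^sup>+ w. ?ind j a w \<partial>?\<mu>))"
  proof -
    have mi: "(\<lambda>w. ?ind j a w) \<in> borel_measurable ?\<mu>" for j a by (rule Lm)
    have ms: "(\<lambda>w. \<Sum>a\<in>?F. ?ind j a w) \<in> borel_measurable ?\<mu>" for j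
      by (rule borel_measurable_sum) (rule mi)
    have "(\<integral>\<^sup>+ w. (\<Sum>j<n. (2::ennreal)^j * (\<Sum>a\<in>?F. ?ind j a w)) \<partial>?\<mu>)
        = (\<Sum>j<n. \<integral>\<^sup>+ w. (2::ennreal)^j * (\<Sum>a\<in>?F. ?ind j a w) \<partial>?\<mu>)"
      by (rule nn_integral_sum) (rule borel_measurable_times_ennreal[OF borel_measurable_const ms])
    also have "\<dots> = (\<Sum>j<n. (2::ennreal)^j * (\<integral>\<^sup>+ w. (\<Sum>a\<in>?F. ?ind j a w) \<partial>?\<mu>))"
      by (rule sum.cong[OF refl], rule nn_integral_cmult[OF ms])
    also have "\<dots> = (\<Sum>j<n. (2::ennreal)^j * (\<Sum>a\<in>?F. \<integral>\<^sup>+ w. ?ind j a w \<partial>?\<mu>))"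
      by (rule sum.cong[OF refl], rule arg_cong[where f="\<lambda>x. (2::ennreal)^_ * x"], rule nn_integral_sum[OF mi])
    finally show ?thesis .
  qed
  also have "\<dots> \<le> (\<Sum>j<n. (2::ennreal)^j * (\<Sum>a\<in>?F. ennreal (\<phi> * (real n / 2^j))))"
  proof (intro sum_mono mult_left_mono)
    fix j a assume a: "a \<in> ?F"
    obtain j0 where "j0 < n" "a j0 = 1 \<or> a j0 = -1" using FF_unit[OF a] by auto
    then show "(\<integral>\<^sup>+ w. ?ind j a w \<partial>?\<mu>) \<le> ennreal (\<phi> * (real n / 2^j))"
      by (intro L1[OF meas bnd int1]) auto
  qed simp
  also have "\<dots> \<le> ennreal (1 * 3 ^ (k * hs_B Bs C n) * real (card Bs) ^ k * real n ^ 2 * \<phi>)"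
  proof (cases "n = 0")
    case True then show ?thesis by simp
  next
    case False
    then have phi0: "0 \<le> \<phi>" using bnd[of 0 0] by simp
    have tm: "(2::ennreal)^j * (\<Sum>a\<in>?F. ennreal (\<phi> * (real n / 2^j))) = ennreal (real (card ?F) * \<phi> * real n)" for j
    proof -
      have "(2::ennreal)^j * (\<Sum>a\<in>?F. ennreal (\<phi> * (real n / 2^j)))
          = ennreal (2^j) * (ennreal (real (card ?F)) * ennreal (\<phi> * (real n / 2^j)))"
      proof -
        have h1: "ennreal (2^j) = ennreal 2 ^ j" by (rule ennreal_power[symmetric]) simp
        have h2: "(2::ennreal)^j = ennreal (2^j)" unfolding h1 by simp
        show ?thesis unfolding h2 sum_constant ennreal_of_nat_eq_real_of_nat ..
      qed
      also have "\<dots> = ennreal (2^j * (real (card ?F) * (\<phi> * (real n / 2^j))))"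
      proof -
        have e1: "ennreal (real (card ?F)) * ennreal (\<phi> * (real n / 2^j)) = ennreal (real (card ?F) * (\<phi> * (real n / 2^j)))"
          using phi0 by (intro ennreal_mult[symmetric]) auto
        have e2: "ennreal (2^j) * ennreal (real (card ?F) * (\<phi> * (real n / 2^j))) = ennreal (2^j * (real (card ?F) * (\<phi> * (real n / 2^j))))"
          using phi0 by (intro ennreal_mult[symmetric]) auto
        show ?thesis unfolding e1 e2 ..
      qed
      also have "2^j * (real (card ?F) * (\<phi> * (real n / 2^j))) = real (card ?F) * \<phi> * real n"
        by simp
      finally show ?thesis .
    qed
    have "(\<Sum>j<n. (2::ennreal)^j * (\<Sum>a\<in>?F. ennreal (\<phi> * (real n / 2^j))))
        = (\<Sum>j<n. ennreal (real (card ?F) * \<phi> * real n))"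
      by (rule sum.cong[OF refl tm])
    also have "\<dots> = ennreal (\<Sum>j<n. real (card ?F) * \<phi> * real n)"
      by (rule sum_ennreal) (use phi0 in auto)
    also have "\<dots> = ennreal (real n * (real (card ?F) * \<phi> * real n))"
      by (simp only: sum_constant card_lessThan)
    also have "\<dots> \<le> ennreal (1 * 3 ^ (k * hs_B Bs C n) * real (card Bs) ^ k * real n ^ 2 * \<phi>)"
    proof (rule ennreal_leI)
      have c: "real (card ?F) \<le> real (card Bs) ^ k * 3 ^ (k * hs_B Bs C n)"
      proof -
        have "card ?F \<le> card Bs ^ k * 3 ^ (k * hs_B Bs C n)" by (rule card_FF[OF fin])
        then have "real (card ?F) \<le> real (card Bs ^ k * 3 ^ (k * hs_B Bs C n))" by (simp only: of_nat_le_iff)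
        then show ?thesis by simp
      qed
      have "real n * (real (card ?F) * \<phi> * real n) = real (card ?F) * (\<phi> * real n ^ 2)"
        by (simp add: power2_eq_square)
      also have "\<dots> \<le> (real (card Bs) ^ k * 3 ^ (k * hs_B Bs C n)) * (\<phi> * real n ^ 2)"
        using c phi0 by (intro mult_right_mono) auto
      also have "\<dots> = 1 * 3 ^ (k * hs_B Bs C n) * real (card Bs) ^ k * real n ^ 2 * \<phi>"
        by simp
      finally show "real n * (real (card ?F) * \<phi> * real n) \<le> 1 * 3 ^ (k * hs_B Bs C n) * real (card Bs) ^ k * real n ^ 2 * \<phi>" .
    qed
    finally show ?thesis .
  qed
  finally show "(\<integral>\<^sup>+ w. hs_max_iter Bs C n m k w \<partial>?\<mu>)
        \<le> ennreal (1 * 3 ^ (k * hs_B Bs C n) * real (card Bs) ^ k * real n ^ 2 * \<phi>)" .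
qed


end
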